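(* Let $f$ be an equivariant function between sets of strings over polynomial orbit-finite alphabets. If for some tuple of atoms $\bar a$ the function $f$ is a composition of $\bar a$-primes, then $f$ is a composition of primes.
   Context: Atoms $\mathbb A$ are a countably infinite set; atom automorphisms are bijections of $\mathbb A$; polynomial orbit-finite sets are built from $\mathbb A$ and singletons by finite products and disjoint unions. A function is $\bar a$-supported if $\pi\circ f\circ\pi^{-1}=f$ for every automorphism $\pi$ fixing $\bar a$ pointwise; equivariant means supported by the empty tuple. Compositions of $\bar a$-primes: the smallest class of functions containing (i) length-preserving homomorphisms obtained by lifting letterwise an $\bar a$-supported function $\Sigma\to\Gamma$ between polynomial orbit-finite sets, (ii) functions computed by classical Mealy machines (finite alphabets, finite states, deterministic transition $Q\times\Sigma\to Q\times\Gamma$ outputting one letter per input letter), (iii) atom propagation $(\mathbb A+\{\epsilon,\downarrow\})^*\to(\mathbb A+\bot)^*$ (position $i$ outputs the atom of position $j$ if $i$ is labelled $\downarrow$, $j<i$ carries an atom and all positions strictly between are labelled $\epsilon$; otherwise $\bot$), closed under sequential composition and parallel composition $f_1|f_2:(\Sigma_1\times\Sigma_2)^*\to(\Gamma_1\times\Gamma_2)^*$ (apply $f_i$ to the $i$-th projection). Compositions of primes are compositions of $\bar a$-primes for $\bar a$ the empty tuple (i.e. with equivariant homomorphisms). *)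

theory Defs
  imports Main
begin

text \<open>Atoms are modelled by the countably infinite type nat; atom automorphisms are
  bijections nat to nat.  All alphabet elements live in a universal value type.\<close>

datatype val = VA nat | VU | VP val val | VL val | VR val

datatype pof = PAtom | PUnit | PEmpty | PProd pof pof | PSum pof pof

fun elems :: "pof \<Rightarrow> val set" where
  "elems PAtom = range VA"
| "elems PUnit = {VU}"
| "elems PEmpty = {}"
| "elems (PProd A B) = {VP x y | x y. x \<in> elems A \<and> y \<in> elems B}"
| "elems (PSum A B) = VL ` elems A \<union> VR ` elems B"

fun act :: "(nat \<Rightarrow> nat) \<Rightarrow> val \<Rightarrow> val" where
  "act \<pi> (VA a) = VA (\<pi> a)"
| "act \<pi> VU = VU"
| "act \<pi> (VP x y) = VP (act \<pi> x) (act \<pi> y)"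
| "act \<pi> (VL x) = VL (act \<pi> x)"
| "act \<pi> (VR x) = VR (act \<pi> x)"

definition supported_on :: "nat list \<Rightarrow> val set \<Rightarrow> (val \<Rightarrow> val) \<Rightarrow> bool" where
  "supported_on abar X h \<longleftrightarrow>
     (\<forall>\<pi>. bij \<pi> \<and> (\<forall>a\<in>set abar. \<pi> a = a) \<longrightarrow> (\<forall>x\<in>X. h (act \<pi> x) = act \<pi> (h x)))"

definition supported_str :: "nat list \<Rightarrow> val set \<Rightarrow> (val list \<Rightarrow> val list) \<Rightarrow> bool" where
  "supported_str abar X f \<longleftrightarrow>
     (\<forall>\<pi>. bij \<pi> \<and> (\<forall>a\<in>set abar. \<pi> a = a) \<longrightarrow>
        (\<forall>w\<in>lists X. f (map (act \<pi>) w) = map (act \<pi>) (f w)))"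

definition equivariant_str :: "val set \<Rightarrow> (val list \<Rightarrow> val list) \<Rightarrow> bool" where
  "equivariant_str X f \<longleftrightarrow> supported_str [] X f"

fun mealy_run :: "(nat \<Rightarrow> val \<Rightarrow> nat \<times> val) \<Rightarrow> nat \<Rightarrow> val list \<Rightarrow> val list" where
  "mealy_run \<delta> q [] = []"
| "mealy_run \<delta> q (x # w) = snd (\<delta> q x) # mealy_run \<delta> (fst (\<delta> q x)) w"

text \<open>Atom propagation: input alphabet A + {eps, down}, output alphabet A + {bot}.\<close>
definition PropIn :: pof where "PropIn = PSum PAtom (PSum PUnit PUnit)"
definition PropOut :: pof where "PropOut = PSum PAtom PUnit"
definition eps_l :: val where "eps_l = VR (VL VU)"
definition down_l :: val where "down_l = VR (VR VU)"
definition bot_l :: val where "bot_l = VR VU"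

definition is_atom_l :: "val \<Rightarrow> bool" where
  "is_atom_l x \<longleftrightarrow> (\<exists>a. x = VL (VA a))"

definition prop_src :: "val list \<Rightarrow> nat \<Rightarrow> nat \<Rightarrow> bool" where
  "prop_src w i j \<longleftrightarrow> j < i \<and> is_atom_l (w ! j) \<and> (\<forall>k. j < k \<and> k < i \<longrightarrow> w ! k = eps_l)"

definition atom_prop :: "val list \<Rightarrow> val list" where
  "atom_prop w = map (\<lambda>i. if w ! i = down_l \<and> (\<exists>j. prop_src w i j)
                            then w ! (THE j. prop_src w i j) else bot_l) [0..<length w]"

fun pfst :: "val \<Rightarrow> val" where "pfst (VP x y) = x" | "pfst _ = VU"
fun psnd :: "val \<Rightarrow> val" where "psnd (VP x y) = y" | "psnd _ = VU"

text \<open>Compositions of abar-primes, as functions S* \<rightarrow> G* (considered extensionally on S*).\<close>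
inductive comp_primes :: "nat list \<Rightarrow> pof \<Rightarrow> pof \<Rightarrow> (val list \<Rightarrow> val list) \<Rightarrow> bool"
  for abar :: "nat list" where
  homomorphism: "\<lbrakk>\<forall>x\<in>elems S. h x \<in> elems G; supported_on abar (elems S) h;
         \<forall>w\<in>lists (elems S). f w = map h w\<rbrakk> \<Longrightarrow> comp_primes abar S G f"
| mealy_machine: "\<lbrakk>finite (elems S); finite (elems G); finite Q; q0 \<in> Q;
          \<forall>q\<in>Q. \<forall>x\<in>elems S. fst (\<delta> q x) \<in> Q \<and> snd (\<delta> q x) \<in> elems G;
          \<forall>w\<in>lists (elems S). f w = mealy_run \<delta> q0 w\<rbrakk> \<Longrightarrow> comp_primes abar S G f"
| propagation: "\<forall>w\<in>lists (elems PropIn). f w = atom_prop w \<Longrightarrow> comp_primes abar PropIn PropOut f"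
| sequential: "\<lbrakk>comp_primes abar S G f; comp_primes abar G D g;
         \<forall>w\<in>lists (elems S). h w = g (f w)\<rbrakk> \<Longrightarrow> comp_primes abar S D h"
| parallel: "\<lbrakk>comp_primes abar S1 G1 f1; comp_primes abar S2 G2 f2;
         \<forall>w\<in>lists (elems (PProd S1 S2)).
            h w = map2 VP (f1 (map pfst w)) (f2 (map psnd w))\<rbrakk>
        \<Longrightarrow> comp_primes abar (PProd S1 S2) (PProd G1 G2) h"

end

theory Submission
  imports Defs
begin


fun atoms :: "val \<Rightarrow> nat set" where
  "atoms (VA a) = {a}"
| "atoms VU = {}"
| "atoms (VP x y) = atoms x \<union> atoms y"
| "atoms (VL x) = atoms x"
| "atoms (VR x) = atoms x"

lemma finite_atoms[simp]: "finite (atoms x)"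
  by (induction x) auto

lemma act_cong: "(\<And>a. a \<in> atoms x \<Longrightarrow> \<pi> a = \<pi>' a) \<Longrightarrow> act \<pi> x = act \<pi>' x"
  by (induction x) auto

lemma act_comp: "act \<pi> (act \<pi>' x) = act (\<pi> \<circ> \<pi>') x"
  by (induction x) auto

lemma act_id[simp]: "act id x = x" "act (\<lambda>x. x) x = x"
  by (induction x) auto

lemma map_act_id: "map (act id) w = w" by (induction w) auto

lemma atoms_act[simp]: "atoms (act \<pi> x) = \<pi> ` atoms x"
  by (induction x) (auto simp: image_Un)

lemma act_noatoms: "atoms x = {} \<Longrightarrow> act \<pi> x = x"
  using act_cong[of x \<pi> id] by auto

lemma act_elems: "x \<in> elems A \<Longrightarrow> act \<pi> x \<in> elems A"
  by (induction A arbitrary: x) auto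

lemma act_inv: "bij \<pi> \<Longrightarrow> act (inv \<pi>) (act \<pi> x) = x"
  by (simp add: act_comp bij_is_inj)

lemma act_inv2: "bij \<pi> \<Longrightarrow> act \<pi> (act (inv \<pi>) x) = x"
  by (simp add: act_comp comp_def surj_f_inv_f bij_is_surj)

lemma act_inj: "bij \<pi> \<Longrightarrow> act \<pi> x = act \<pi> y \<Longrightarrow> x = y"
  by (metis act_inv)

lemma map_act_inj: "bij \<pi> \<Longrightarrow> map (act \<pi>) xs = map (act \<pi>) ys \<Longrightarrow> xs = ys"
  using act_inj inj_map_eq_map[of "act \<pi>"] by (metis injI)

lemma elems_infinite_atom: "x \<in> elems A \<Longrightarrow> atoms x \<noteq> {} \<Longrightarrow> infinite (elems A)"
proof (induction A arbitrary: x)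
  case PAtom
  have "inj VA" by (auto intro: injI)
  then show ?case using infinite_UNIV_nat finite_imageD by auto
next
  case (PProd A B)
  then obtain y z where x: "x = VP y z" "y \<in> elems A" "z \<in> elems B" by auto
  show ?case
  proof
    assume fin: "finite (elems (PProd A B))"
    have "elems A \<subseteq> pfst ` elems (PProd A B)" using x by force
    hence fA: "finite (elems A)" using fin finite_surj by blast
    have "elems B \<subseteq> psnd ` elems (PProd A B)" using x by force
    hence fB: "finite (elems B)" using fin finite_surj by blast
    from PProd.prems x have "atoms y \<noteq> {} \<or> atoms z \<noteq> {}" by auto
    thus False using PProd.IH x fA fB by blast
  qed
next
  case (PSum A B)
  have i: "inj VL" "inj VR" by (auto intro: injI)
  from PSum.prems(1) consider y where "x = VL y" "y \<in> elems A" | y where "x = VR y" "y \<in> elems B" by auto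
  then show ?case
  proof cases
    case 1
    hence "infinite (elems A)" using PSum.IH(1)[of y] PSum.prems(2) by auto
    thus ?thesis using i by (auto simp: finite_image_iff inj_on_subset[OF _ subset_UNIV])
  next
    case 2
    hence "infinite (elems B)" using PSum.IH(2)[of y] PSum.prems(2) by auto
    thus ?thesis using i by (auto simp: finite_image_iff inj_on_subset[OF _ subset_UNIV])
  qed
qed auto

lemma finite_noatoms: "finite (elems A) \<Longrightarrow> x \<in> elems A \<Longrightarrow> atoms x = {}"
  using elems_infinite_atom by blast

definition sw :: "nat \<Rightarrow> nat \<Rightarrow> nat \<Rightarrow> nat" where
  "sw a b x = (if x = a then b else if x = b then a else x)"

lemma sw_sw: "sw a b (sw a b x) = x" by (simp add: sw_def)

lemma bij_sw: "bij (sw a b)"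
  by (metis bij_betw_byWitness sw_sw subset_UNIV)

lemma supp_atoms:
  assumes sup: "supported_on as (elems A) h" and x: "x \<in> elems A"
  shows "atoms (h x) \<subseteq> atoms x \<union> set as"
proof
  fix b assume b: "b \<in> atoms (h x)"
  show "b \<in> atoms x \<union> set as"
  proof (rule ccontr)
    assume nb: "b \<notin> atoms x \<union> set as"
    obtain c where c: "c \<notin> atoms x \<union> set as \<union> atoms (h x)"
      using ex_new_if_finite[OF infinite_UNIV_nat, of "atoms x \<union> set as \<union> atoms (h x)"] by auto
    have cb: "c \<noteq> b" using c b by auto
    have fix_as: "\<forall>a\<in>set as. sw b c a = a" using nb c by (auto simp: sw_def)
    have "act (sw b c) x = act id x" by (rule act_cong) (use nb c in \<open>auto simp: sw_def\<close>)
    hence "act (sw b c) x = x" by simp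
    hence "h x = act (sw b c) (h x)" using sup x bij_sw fix_as unfolding supported_on_def by metis
    hence "atoms (h x) = sw b c ` atoms (h x)" by (metis atoms_act)
    moreover have "c \<in> sw b c ` atoms (h x)" using b by (force simp: sw_def)
    ultimately show False using c by auto
  qed
qed

definition latoms :: "val list \<Rightarrow> nat set" where
  "latoms w = \<Union> (atoms ` set w)"

lemma finite_latoms[simp]: "finite (latoms w)" by (simp add: latoms_def)

lemma latoms_map_act[simp]: "latoms (map (act \<pi>) w) = \<pi> ` latoms w"
  by (auto simp: latoms_def)

lemma lists_act: "w \<in> lists (elems A) \<Longrightarrow> map (act \<pi>) w \<in> lists (elems A)"
  using act_elems by auto

lemma map_act_cong: "(\<And>a. a \<in> latoms w \<Longrightarrow> \<pi> a = \<pi>' a) \<Longrightarrow> map (act \<pi>) w = map (act \<pi>') w"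
  by (auto simp: latoms_def intro!: act_cong)

lemma equiv_latoms:
  assumes eq: "equivariant_str (elems A) f" and w: "w \<in> lists (elems A)"
  shows "latoms (f w) \<subseteq> latoms w"
proof
  fix b assume b: "b \<in> latoms (f w)"
  show "b \<in> latoms w"
  proof (rule ccontr)
    assume nb: "b \<notin> latoms w"
    obtain c where c: "c \<notin> latoms w \<union> latoms (f w)"
      using ex_new_if_finite[OF infinite_UNIV_nat, of "latoms w \<union> latoms (f w)"] by auto
    have "map (act (sw b c)) w = map (act id) w"
      by (rule map_act_cong) (use nb c in \<open>auto simp: sw_def\<close>)
    hence m: "map (act (sw b c)) w = w" by (simp only: map_act_id)
    have "f (map (act (sw b c)) w) = map (act (sw b c)) (f w)"
      using eq w bij_sw[of b c] unfolding equivariant_str_def supported_str_def by simp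
    hence "f w = map (act (sw b c)) (f w)" using m by simp
    hence "latoms (f w) = sw b c ` latoms (f w)" by (metis latoms_map_act)
    moreover have "c \<in> sw b c ` latoms (f w)" using b by (force simp: sw_def)
    ultimately show False using c by auto
  qed
qed

lemma bij_extend:
  fixes A C :: "nat set" and g :: "nat \<Rightarrow> nat"
  assumes "finite A" "inj_on g A" "g ` A \<inter> C = {}" "A \<inter> C = {}"
  shows "\<exists>\<rho>. bij \<rho> \<and> (\<forall>x\<in>A. \<rho> x = g x) \<and> (\<forall>c\<in>C. \<rho> c = c)"
  using assms
proof (induction A rule: finite_induct)
  case empty
  show ?case by (intro exI[of _ "\<lambda>x. x"]) (auto simp: bij_def inj_on_def)
next
  case (insert a A)
  then obtain \<rho> where r: "bij \<rho>" "\<forall>x\<in>A. \<rho> x = g x" "\<forall>c\<in>C. \<rho> c = c" by auto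
  define \<rho>' where "\<rho>' = sw (\<rho> a) (g a) \<circ> \<rho>"
  have "bij \<rho>'" unfolding \<rho>'_def using r(1) bij_sw bij_comp by blast
  moreover have "\<rho>' a = g a" by (simp add: \<rho>'_def sw_def)
  moreover have "\<forall>x\<in>A. \<rho>' x = g x"
  proof
    fix x assume x: "x \<in> A"
    have "g x \<noteq> g a" using insert.prems(1) insert.hyps(2) x by (metis inj_on_contraD insertI1 insertI2)
    moreover have "\<rho> x \<noteq> \<rho> a" using r(1) x insert.hyps(2) by (metis bij_is_inj inj_eq)
    ultimately show "\<rho>' x = g x" using r(2) x by (simp add: \<rho>'_def sw_def)
  qed
  moreover have "\<forall>c\<in>C. \<rho>' c = c"
  proof
    fix c assume c: "c \<in> C"
    have "c \<noteq> g a" using insert.prems(2) c by auto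
    moreover have "\<rho> a \<noteq> c" using r c insert.prems(3) by (metis IntI bij_is_inj empty_iff inj_eq insertI1)
    ultimately show "\<rho>' c = c" using r(3) c by (auto simp: \<rho>'_def sw_def)
  qed
  ultimately show ?case by (intro exI[of _ \<rho>']) auto
qed

lemma exists_moving:
  fixes R C :: "nat set"
  assumes "finite R" "finite C"
  shows "\<exists>\<sigma>. bij \<sigma> \<and> \<sigma> ` R \<inter> C = {}"
proof -
  define M where "M = Suc (Max (R \<union> C \<union> {0}))"
  have ge: "x < M" if "x \<in> R \<union> C" for x
  proof -
    have "x \<le> Max (R \<union> C \<union> {0})" by (rule Max_ge) (use assms that in auto)
    thus ?thesis by (simp add: M_def)
  qed
  define g where "g = (\<lambda>x::nat. x + M)"
  have "inj_on g R" by (auto simp: g_def inj_on_def)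
  moreover have "g ` R \<inter> {} = {}" "R \<inter> {} = {}" by auto
  ultimately obtain \<sigma> where s: "bij \<sigma>" "\<forall>x\<in>R. \<sigma> x = g x"
    using bij_extend[OF assms(1)] by blast
  have "\<sigma> ` R \<inter> C = {}"
  proof (rule ccontr)
    assume "\<sigma> ` R \<inter> C \<noteq> {}"
    then obtain x where "x \<in> R" "x + M \<in> C" using s by (auto simp: g_def)
    thus False using ge[of "x+M"] by auto
  qed
  thus ?thesis using s by blast
qed



fun cT :: "nat \<Rightarrow> pof" where
  "cT 0 = PEmpty" | "cT (Suc n) = PSum PUnit (cT n)"
fun ck :: "nat \<Rightarrow> val" where
  "ck 0 = VL VU" | "ck (Suc k) = VR (ck k)"
fun cidx :: "val \<Rightarrow> nat" where
  "cidx (VR v) = Suc (cidx v)" | "cidx _ = 0"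

lemma elems_cT: "elems (cT n) = ck ` {..<n}"
proof (induction n)
  case (Suc n)
  have "ck ` {..<Suc n} = insert (ck 0) (ck ` Suc ` {..<n})"
    by (simp add: lessThan_Suc_eq_insert_0 image_image del: image_Suc_lessThan)
  thus ?case using Suc by (auto simp: image_image)
qed simp

lemma cidx_ck[simp]: "cidx (ck k) = k" by (induction k) auto
lemma atoms_ck[simp]: "atoms (ck k) = {}" by (induction k) auto
lemma finite_cT: "finite (elems (cT n))" by (simp add: elems_cT)

lemma cT_mem: "c \<in> elems (cT n) \<Longrightarrow> c = ck (cidx c) \<and> cidx c < n \<and> atoms c = {}"
  by (auto simp: elems_cT)

fun enc :: "nat \<Rightarrow> pof \<Rightarrow> pof" where
  "enc n PAtom = PSum PAtom (cT n)"
| "enc n PUnit = PUnit"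
| "enc n PEmpty = PEmpty"
| "enc n (PProd A B) = PProd (enc n A) (enc n B)"
| "enc n (PSum A B) = PSum (enc n A) (enc n B)"

definition idx :: "nat list \<Rightarrow> nat \<Rightarrow> nat" where
  "idx as a = (LEAST k. k < length as \<and> as ! k = a)"

lemma idx: "a \<in> set as \<Longrightarrow> idx as a < length as \<and> as ! idx as a = a"
  unfolding idx_def by (rule LeastI_ex) (auto simp: in_set_conv_nth)

fun encv :: "nat list \<Rightarrow> pof \<Rightarrow> val \<Rightarrow> val" where
  "encv as PAtom (VA a) = (if a \<in> set as then VR (ck (idx as a)) else VL (VA a))"
| "encv as (PProd A B) (VP x y) = VP (encv as A x) (encv as B y)"
| "encv as (PSum A B) (VL x) = VL (encv as A x)"
| "encv as (PSum A B) (VR x) = VR (encv as B x)"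
| "encv as _ x = x"

fun decv :: "nat list \<Rightarrow> pof \<Rightarrow> val \<Rightarrow> val" where
  "decv as PAtom (VL x) = x"
| "decv as PAtom (VR c) = VA (as ! cidx c)"
| "decv as (PProd A B) (VP x y) = VP (decv as A x) (decv as B y)"
| "decv as (PSum A B) (VL x) = VL (decv as A x)"
| "decv as (PSum A B) (VR x) = VR (decv as B x)"
| "decv as _ x = x"

fun embv :: "pof \<Rightarrow> val \<Rightarrow> val" where
  "embv PAtom x = VL x"
| "embv (PProd A B) (VP x y) = VP (embv A x) (embv B y)"
| "embv (PSum A B) (VL x) = VL (embv A x)"
| "embv (PSum A B) (VR x) = VR (embv B x)"
| "embv _ x = x"

fun unemb :: "pof \<Rightarrow> val \<Rightarrow> val" where
  "unemb PAtom (VL x) = x"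
| "unemb (PProd A B) (VP x y) = VP (unemb A x) (unemb B y)"
| "unemb (PSum A B) (VL x) = VL (unemb A x)"
| "unemb (PSum A B) (VR x) = VR (unemb B x)"
| "unemb _ x = x"

lemma encv_elems: "x \<in> elems A \<Longrightarrow> encv as A x \<in> elems (enc (length as) A)"
  by (induction A arbitrary: x) (auto simp: elems_cT idx)

lemma decv_encv: "x \<in> elems A \<Longrightarrow> decv as A (encv as A x) = x"
  by (induction A arbitrary: x) (auto simp: idx)

lemma decv_elems: "x \<in> elems (enc (length as) A) \<Longrightarrow> decv as A x \<in> elems A"
  by (induction A arbitrary: x) (auto simp: elems_cT)

lemma atoms_encv: "x \<in> elems A \<Longrightarrow> atoms (encv as A x) = atoms x - set as"
  by (induction A arbitrary: x) (auto split: if_splits)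

lemma atoms_decv: "x \<in> elems (enc (length as) A) \<Longrightarrow> atoms (decv as A x) \<subseteq> atoms x \<union> set as"
  by (induction A arbitrary: x) (fastforce simp: elems_cT)+

lemma embv_elems: "x \<in> elems A \<Longrightarrow> embv A x \<in> elems (enc n A)"
  by (induction A arbitrary: x) auto

lemma unemb_embv: "x \<in> elems A \<Longrightarrow> unemb A (embv A x) = x"
  by (induction A arbitrary: x) auto

lemma embv_act: "x \<in> elems A \<Longrightarrow> embv A (act \<pi> x) = act \<pi> (embv A x)"
  by (induction A arbitrary: x) auto

lemma encv_emb: "x \<in> elems A \<Longrightarrow> atoms x \<inter> set as = {} \<Longrightarrow> encv as A x = embv A x"
  by (induction A arbitrary: x) (auto simp: Int_Un_distrib2)

lemma encv_noatoms: "x \<in> elems A \<Longrightarrow> atoms x = {} \<Longrightarrow> encv as A x = x"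
  by (induction A arbitrary: x) auto

lemma decv_act:
  assumes "x \<in> elems (enc (length as) A)" "\<forall>a\<in>set as. \<rho> a = a"
  shows "decv as A (act \<rho> x) = act \<rho> (decv as A x)"
  using assms
proof (induction A arbitrary: x)
  case PAtom
  then show ?case by (auto simp: elems_cT act_noatoms)
qed auto

lemma encv_act:
  assumes "x \<in> elems A" "bij \<rho>" "\<forall>a\<in>set as. \<rho> a = a"
  shows "encv as A (act \<rho> x) = act \<rho> (encv as A x)"
  using assms
proof (induction A arbitrary: x)
  case PAtom
  then obtain a where x: "x = VA a" by auto
  have "\<rho> a \<in> set as \<longleftrightarrow> a \<in> set as"
    using PAtom.prems by (metis bij_is_inj inj_eq)
  then show ?case using x PAtom.prems by (auto simp: act_noatoms)
qed auto

lemma elems_enc_empty: "elems (enc n A) = {} \<longleftrightarrow> elems A = {}"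
  by (induction A) auto

lemma elems_enc_finite: "finite (elems A) \<Longrightarrow> elems (enc n A) = elems A"
proof (induction A)
  case PAtom
  then show ?case using elems_infinite_atom[of "VA 0" PAtom] by auto
next
  case (PProd A B)
  show ?case
  proof (cases "elems A = {} \<or> elems B = {}")
    case True
    then show ?thesis using elems_enc_empty[of n A] elems_enc_empty[of n B] by auto
  next
    case False
    then obtain a b where ab: "a \<in> elems A" "b \<in> elems B" by auto
    have "elems A \<subseteq> pfst ` elems (PProd A B)" using ab by force
    hence fA: "finite (elems A)" using PProd.prems finite_surj by blast
    have "elems B \<subseteq> psnd ` elems (PProd A B)" using ab by force
    hence fB: "finite (elems B)" using PProd.prems finite_surj by blast
    show ?thesis using PProd.IH fA fB by simp
  qed
next
  case (PSum A B)
  have i: "inj VL" "inj VR" by (auto intro: injI)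
  hence "finite (elems A)" "finite (elems B)" using PSum.prems
    by (auto simp: finite_image_iff inj_on_subset[OF _ subset_UNIV])
  then show ?case using PSum.IH by simp
qed auto



fun lne :: "(val \<Rightarrow> bool) \<Rightarrow> val list \<Rightarrow> nat \<Rightarrow> nat option" where
  "lne P w 0 = None"
| "lne P w (Suc i) = (if P (w ! i) then lne P w i else Some i)"

lemma lne_Some: "lne P w i = Some j \<Longrightarrow> j < i \<and> \<not> P (w ! j) \<and> (\<forall>k. j < k \<and> k < i \<longrightarrow> P (w ! k))"
proof (induction i)
  case (Suc i)
  then show ?case by (auto split: if_splits simp: less_Suc_eq)
qed simp

lemma lne_None: "lne P w i = None \<Longrightarrow> \<forall>k<i. P (w ! k)"
proof (induction i)
  case (Suc i)
  then show ?case by (auto split: if_splits simp: less_Suc_eq)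
qed simp

lemma lne_map: "i \<le> length w \<Longrightarrow> lne P (map g w) i = lne (P \<circ> g) w i"
  by (induction i) auto

lemma lne_cong: "(\<And>k. k < i \<Longrightarrow> P (w ! k) = P' (w ! k)) \<Longrightarrow> lne P w i = lne P' w i"
  by (induction i) auto

abbreviation E :: "val \<Rightarrow> bool" where "E x \<equiv> x = eps_l"

lemma prop_src_lne: "prop_src w i j \<longleftrightarrow> lne E w i = Some j \<and> is_atom_l (w ! j)"
proof
  assume p: "prop_src w i j"
  hence ne: "w ! j \<noteq> eps_l" by (auto simp: prop_src_def is_atom_l_def eps_l_def)
  show "lne E w i = Some j \<and> is_atom_l (w ! j)"
  proof (cases "lne E w i")
    case None
    thus ?thesis using lne_None[OF None] p ne by (auto simp: prop_src_def)
  next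
    case (Some j')
    note s = lne_Some[OF Some]
    have "j' = j"
    proof (rule ccontr)
      assume "j' \<noteq> j"
      hence "j < j' \<or> j' < j" by auto
      thus False using s p ne by (auto simp: prop_src_def)
    qed
    thus ?thesis using Some p by (auto simp: prop_src_def)
  qed
next
  assume "lne E w i = Some j \<and> is_atom_l (w ! j)"
  thus "prop_src w i j" using lne_Some[of E w i j] by (auto simp: prop_src_def)
qed

lemma atom_prop_nth:
  assumes "i < length w"
  shows "atom_prop w ! i = (if w ! i = down_l \<and> (\<exists>j. lne E w i = Some j \<and> is_atom_l (w ! j))
                            then w ! the (lne E w i) else bot_l)"
proof -
  have ex: "(\<exists>j. prop_src w i j) = (\<exists>j. lne E w i = Some j \<and> is_atom_l (w ! j))"
    by (simp add: prop_src_lne)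
  have th: "(THE j. prop_src w i j) = the (lne E w i)" if "\<exists>j. lne E w i = Some j \<and> is_atom_l (w ! j)"
    using that by (auto simp: prop_src_lne)
  show ?thesis using assms ex th by (auto simp: atom_prop_def)
qed

lemma length_atom_prop[simp]: "length (atom_prop w) = length w"
  by (simp add: atom_prop_def)

lemma act_eq_noatoms: "atoms y = {} \<Longrightarrow> act \<pi> x = y \<longleftrightarrow> x = y"
proof (induction x arbitrary: y)
  case (VA a) then show ?case by (cases y) auto
next
  case VU then show ?case by (cases y) auto
next
  case (VP x1 x2) then show ?case by (cases y) auto
next
  case (VL x) then show ?case by (cases y) auto
next
  case (VR x) then show ?case by (cases y) auto
qed

lemma act_eps[simp]: "act \<pi> x = eps_l \<longleftrightarrow> x = eps_l"
  by (rule act_eq_noatoms) (simp add: eps_l_def)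

lemma act_down[simp]: "act \<pi> x = down_l \<longleftrightarrow> x = down_l"
  by (rule act_eq_noatoms) (simp add: down_l_def)

lemma act_VA: "act \<pi> y = VA b \<longleftrightarrow> (\<exists>a. y = VA a \<and> \<pi> a = b)"
  by (cases y) auto

lemma act_is_atom[simp]: "is_atom_l (act \<pi> x) \<longleftrightarrow> is_atom_l x"
  by (cases x) (auto simp: is_atom_l_def act_VA)

lemma act_bot[simp]: "act \<pi> bot_l = bot_l" by (simp add: bot_l_def)
lemma act_eps'[simp]: "act \<pi> eps_l = eps_l" by (simp add: eps_l_def)
lemma act_down'[simp]: "act \<pi> down_l = down_l" by (simp add: down_l_def)

lemma atom_prop_act: "atom_prop (map (act \<pi>) w) = map (act \<pi>) (atom_prop w)"
proof (rule nth_equalityI)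
  fix i assume i: "i < length (atom_prop (map (act \<pi>) w))"
  hence i': "i < length w" by simp
  have l: "lne E (map (act \<pi>) w) i = lne E w i"
    using lne_map[of i w E "act \<pi>"] i' by (simp add: comp_def)
  show "atom_prop (map (act \<pi>) w) ! i = map (act \<pi>) (atom_prop w) ! i"
    using i' l lne_Some[of E w i] by (auto simp: atom_prop_nth)
qed simp

lemma atom_prop_lists: "w \<in> lists (elems PropIn) \<Longrightarrow> atom_prop w \<in> lists (elems PropOut)"
proof -
  assume w: "w \<in> lists (elems PropIn)"
  have "atom_prop w ! i \<in> elems PropOut" if "i < length w" for i
    using that lne_Some[of E w i]
    by (auto simp: atom_prop_nth PropOut_def bot_l_def is_atom_l_def)
  thus ?thesis by (metis in_set_conv_nth length_atom_prop in_listsI)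
qed

lemma mealy_out:
  assumes "\<forall>q\<in>Q. \<forall>x\<in>S. fst (\<delta> q x) \<in> Q \<and> snd (\<delta> q x) \<in> G"
  shows "q \<in> Q \<Longrightarrow> w \<in> lists S \<Longrightarrow> mealy_run \<delta> q w \<in> lists G \<and> length (mealy_run \<delta> q w) = length w"
  using assms by (induction w arbitrary: q) auto

lemma mealy_nth: "i < length w \<Longrightarrow>
  mealy_run \<delta> q w ! i = snd (\<delta> (foldl (\<lambda>q x. fst (\<delta> q x)) q (take i w)) (w ! i))"
proof (induction w arbitrary: q i)
  case (Cons x w)
  then show ?case by (cases i) auto
qed simp

lemma map2_lists:
  assumes "a \<in> lists (elems A)" "b \<in> lists (elems B)"
  shows "map2 VP a b \<in> lists (elems (PProd A B))"
  using assms by (auto dest!: set_zip_leftD set_zip_rightD elim!: in_set_zipE)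

lemma cp_out: "comp_primes as S G f \<Longrightarrow> w \<in> lists (elems S) \<Longrightarrow> f w \<in> lists (elems G) \<and> length (f w) = length w"
proof (induction arbitrary: w rule: comp_primes.induct)
  case (homomorphism S h G f)
  then show ?case by auto
next
  case (mealy_machine S G Q q0 \<delta> f)
  then show ?case using mealy_out[of Q "elems S" \<delta> "elems G" q0 w] by auto
next
  case (propagation f)
  then show ?case using atom_prop_lists by auto
next
  case (sequential S G f D g h)
  then show ?case by simp
next
  case (parallel S1 G1 f1 S2 G2 f2 h)
  have "map pfst w \<in> lists (elems S1)" "map psnd w \<in> lists (elems S2)"
    using parallel.prems by force+
  hence "f1 (map pfst w) \<in> lists (elems G1)" "f2 (map psnd w) \<in> lists (elems G2)"
    "length (f1 (map pfst w)) = length w" "length (f2 (map psnd w)) = length w"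
    using parallel.IH by auto
  moreover have "h w = map2 VP (f1 (map pfst w)) (f2 (map psnd w))" using parallel.hyps(3) parallel.prems by blast
  ultimately show ?case using map2_lists by simp
qed

lemma pfst_act: "x \<in> elems (PProd A B) \<Longrightarrow> pfst (act \<pi> x) = act \<pi> (pfst x)" by auto
lemma psnd_act: "x \<in> elems (PProd A B) \<Longrightarrow> psnd (act \<pi> x) = act \<pi> (psnd x)" by auto

lemma map2_act: "map2 VP (map (act \<pi>) a) (map (act \<pi>) b) = map (act \<pi>) (map2 VP a b)"
  by (simp add: zip_map1 zip_map2 split_def)

lemma cp_equiv: "comp_primes abar S G f \<Longrightarrow> abar = [] \<Longrightarrow> bij \<pi> \<Longrightarrow> w \<in> lists (elems S) \<Longrightarrow>
   f (map (act \<pi>) w) = map (act \<pi>) (f w)"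
proof (induction arbitrary: w rule: comp_primes.induct)
  case (homomorphism S h G f)
  have "f (map (act \<pi>) w) = map h (map (act \<pi>) w)"
    using homomorphism lists_act by blast
  also have "\<dots> = map (act \<pi>) (map h w)"
    using homomorphism.hyps(2) homomorphism.prems unfolding supported_on_def by auto
  finally show ?case using homomorphism by auto
next
  case (mealy_machine S G Q q0 \<delta> f)
  have "map (act \<pi>) w = w" using mealy_machine.prems finite_noatoms[OF mealy_machine.hyps(1)]
    by (auto intro!: map_idI act_noatoms)
  moreover have "f w \<in> lists (elems G)" using mealy_machine mealy_out[of Q "elems S" \<delta> "elems G" q0 w] by auto
  hence "map (act \<pi>) (f w) = f w" using finite_noatoms[OF mealy_machine.hyps(2)]
    by (auto intro!: map_idI act_noatoms)
  ultimately show ?case by simp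
next
  case (propagation f)
  then show ?case using atom_prop_act lists_act by metis
next
  case (sequential S G f D g h)
  have fw: "f w \<in> lists (elems G)" using cp_out sequential.hyps(1) sequential.prems(3) by blast
  have "h (map (act \<pi>) w) = g (f (map (act \<pi>) w))"
    using sequential.hyps(3) lists_act[OF sequential.prems(3)] by blast
  also have "\<dots> = g (map (act \<pi>) (f w))" using sequential.IH(1) sequential.prems by simp
  also have "\<dots> = map (act \<pi>) (g (f w))" using sequential.IH(2) fw sequential.prems by simp
  also have "\<dots> = map (act \<pi>) (h w)" using sequential.hyps(3) sequential.prems by simp
  finally show ?case .
next
  case (parallel S1 G1 f1 S2 G2 f2 h)
  have w1: "map pfst w \<in> lists (elems S1)" "map psnd w \<in> lists (elems S2)"
    using parallel.prems by force+
  have m: "map pfst (map (act \<pi>) w) = map (act \<pi>) (map pfst w)"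
       "map psnd (map (act \<pi>) w) = map (act \<pi>) (map psnd w)"
    using parallel.prems by force+
  have "h (map (act \<pi>) w) = map2 VP (f1 (map pfst (map (act \<pi>) w))) (f2 (map psnd (map (act \<pi>) w)))"
    using parallel.hyps(3) lists_act[OF parallel.prems(3)] by blast
  also have "\<dots> = map2 VP (map (act \<pi>) (f1 (map pfst w))) (map (act \<pi>) (f2 (map psnd w)))"
  proof -
    have a: "f1 (map (act \<pi>) (map pfst w)) = map (act \<pi>) (f1 (map pfst w))"
      using parallel.IH(1) parallel.prems(1,2) w1(1) by blast
    have b: "f2 (map (act \<pi>) (map psnd w)) = map (act \<pi>) (f2 (map psnd w))"
      using parallel.IH(2) parallel.prems(1,2) w1(2) by blast
    show ?thesis by (simp only: m a b)
  qed
  also have "\<dots> = map (act \<pi>) (h w)" using map2_act parallel.hyps(3) parallel.prems by simp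
  finally show ?case .
qed



definition Phi :: "nat list \<Rightarrow> pof \<Rightarrow> pof \<Rightarrow> (val \<Rightarrow> val) \<Rightarrow> (nat \<Rightarrow> nat) \<Rightarrow> val \<Rightarrow> val" where
  "Phi as S G h \<sigma> x = act (inv \<sigma>) (encv as G (h (decv as S (act \<sigma> x))))"

definition good :: "nat list \<Rightarrow> val \<Rightarrow> (nat \<Rightarrow> nat) \<Rightarrow> bool" where
  "good as x \<sigma> \<longleftrightarrow> bij \<sigma> \<and> \<sigma> ` atoms x \<inter> set as = {}"

definition hsim :: "nat list \<Rightarrow> pof \<Rightarrow> pof \<Rightarrow> (val \<Rightarrow> val) \<Rightarrow> val \<Rightarrow> val" where
  "hsim as S G h x = Phi as S G h (SOME \<sigma>. good as x \<sigma>) x"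

lemma good_ex: "\<exists>\<sigma>. good as x \<sigma>"
  using exists_moving[of "atoms x" "set as"] by (auto simp: good_def)

lemma good_some: "good as x (SOME \<sigma>. good as x \<sigma>)"
  using good_ex someI_ex by metis

lemma Phi_welldef:
  assumes hG: "\<forall>x\<in>elems S. h x \<in> elems G" and sup: "supported_on as (elems S) h"
    and x: "x \<in> elems (enc (length as) S)" and g1: "good as x \<sigma>1" and g2: "good as x \<sigma>2"
  shows "Phi as S G h \<sigma>1 x = Phi as S G h \<sigma>2 x"
proof -
  have b1: "bij \<sigma>1" and b2: "bij \<sigma>2" using g1 g2 by (auto simp: good_def)
  have i1: "inj \<sigma>1" using b1 bij_is_inj by blast
  obtain \<rho> where r: "bij \<rho>" "\<forall>y\<in>\<sigma>1 ` atoms x. \<rho> y = (\<sigma>2 \<circ> inv \<sigma>1) y" "\<forall>c\<in>set as. \<rho> c = c"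
  proof -
    have ii: "inj_on (inv \<sigma>1) (\<sigma>1 ` atoms x)" by (rule inj_on_inv_into) auto
    have "inj \<sigma>2" using b2 bij_is_inj by blast
    hence "inj_on \<sigma>2 (inv \<sigma>1 ` (\<sigma>1 ` atoms x))" using inj_on_subset subset_UNIV by blast
    hence "inj_on (\<sigma>2 \<circ> inv \<sigma>1) (\<sigma>1 ` atoms x)" using comp_inj_on[OF ii] by blast
    moreover have "(\<sigma>2 \<circ> inv \<sigma>1) ` (\<sigma>1 ` atoms x) \<inter> set as = {}"
      using g2 i1 by (auto simp: good_def image_comp)
    moreover have "\<sigma>1 ` atoms x \<inter> set as = {}" using g1 by (auto simp: good_def)
    ultimately show ?thesis using bij_extend[of "\<sigma>1 ` atoms x" "\<sigma>2 \<circ> inv \<sigma>1" "set as"] that by auto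
  qed
  define y where "y = act \<sigma>1 x"
  have y: "y \<in> elems (enc (length as) S)" using x act_elems y_def by blast
  have eq2: "act \<sigma>2 x = act \<rho> y"
    unfolding y_def act_comp by (rule act_cong) (use r(2) i1 in auto)
  define z where "z = decv as S y"
  have z: "z \<in> elems S" using decv_elems y z_def by blast
  have "decv as S (act \<rho> y) = act \<rho> z" using decv_act[OF y] r(3) z_def by blast
  moreover have "h (act \<rho> z) = act \<rho> (h z)" using sup z r(1,3) unfolding supported_on_def by blast
  moreover have "encv as G (act \<rho> (h z)) = act \<rho> (encv as G (h z))"
    using encv_act hG z r(1,3) by blast
  ultimately have P2: "Phi as S G h \<sigma>2 x = act (inv \<sigma>2 \<circ> \<rho>) (encv as G (h z))"
    unfolding Phi_def eq2 by (simp add: act_comp)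
  have P1: "Phi as S G h \<sigma>1 x = act (inv \<sigma>1) (encv as G (h z))"
    unfolding Phi_def z_def y_def ..
  have at: "atoms (encv as G (h z)) \<subseteq> \<sigma>1 ` atoms x"
  proof -
    have "atoms (encv as G (h z)) = atoms (h z) - set as" using atoms_encv hG z by blast
    also have "\<dots> \<subseteq> atoms z - set as" using supp_atoms[OF sup z] by blast
    also have "\<dots> \<subseteq> atoms y" using atoms_decv[OF y] z_def by blast
    finally show ?thesis by (simp add: y_def)
  qed
  have "act (inv \<sigma>2 \<circ> \<rho>) (encv as G (h z)) = act (inv \<sigma>1) (encv as G (h z))"
  proof (rule act_cong)
    fix a assume "a \<in> atoms (encv as G (h z))"
    then obtain b where b: "b \<in> atoms x" "a = \<sigma>1 b" using at by auto
    have "\<rho> a = \<sigma>2 b" using r(2) b i1 by auto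
    thus "(inv \<sigma>2 \<circ> \<rho>) a = inv \<sigma>1 a" using b b2 i1 by (simp add: bij_is_inj)
  qed
  thus ?thesis using P1 P2 by simp
qed

lemma hsim_props:
  assumes hG: "\<forall>x\<in>elems S. h x \<in> elems G" and sup: "supported_on as (elems S) h"
  shows "\<forall>x\<in>elems (enc (length as) S). hsim as S G h x \<in> elems (enc (length as) G)"
    and "supported_on [] (elems (enc (length as) S)) (hsim as S G h)"
    and "\<forall>x\<in>elems S. hsim as S G h (encv as S x) = encv as G (h x)"
proof -
  show "\<forall>x\<in>elems (enc (length as) S). hsim as S G h x \<in> elems (enc (length as) G)"
    using hG act_elems decv_elems encv_elems
    by (simp add: hsim_def Phi_def)
next
  show "supported_on [] (elems (enc (length as) S)) (hsim as S G h)"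
    unfolding supported_on_def
  proof (intro allI impI ballI)
    fix \<pi> :: "nat \<Rightarrow> nat" and x assume \<pi>: "bij \<pi> \<and> (\<forall>a\<in>set []. \<pi> a = a)" and x: "x \<in> elems (enc (length as) S)"
    hence b: "bij \<pi>" by simp
    define \<sigma>0 where "\<sigma>0 = (SOME \<sigma>. good as x \<sigma>)"
    have g0: "good as x \<sigma>0" unfolding \<sigma>0_def by (rule good_some)
    define \<sigma>' where "\<sigma>' = \<sigma>0 \<circ> inv \<pi>"
    have g': "good as (act \<pi> x) \<sigma>'"
      using g0 b by (auto simp: good_def \<sigma>'_def image_comp bij_comp bij_imp_bij_inv bij_is_inj)
    have x': "act \<pi> x \<in> elems (enc (length as) S)" using x act_elems by blast
    have "hsim as S G h (act \<pi> x) = Phi as S G h \<sigma>' (act \<pi> x)"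
      unfolding hsim_def by (rule Phi_welldef[OF hG sup x' good_some g'])
    also have "\<dots> = act \<pi> (Phi as S G h \<sigma>0 x)"
    proof -
      have "act \<sigma>' (act \<pi> x) = act \<sigma>0 x" using b by (simp add: \<sigma>'_def act_comp comp_assoc bij_is_inj)
      moreover have "inv \<sigma>' = \<pi> \<circ> inv \<sigma>0" using b g0
        by (simp add: \<sigma>'_def good_def o_inv_distrib bij_imp_bij_inv inv_inv_eq)
      ultimately show ?thesis by (simp add: Phi_def act_comp)
    qed
    finally show "hsim as S G h (act \<pi> x) = act \<pi> (hsim as S G h x)"
      by (simp add: hsim_def \<sigma>0_def)
  qed
next
  show "\<forall>x\<in>elems S. hsim as S G h (encv as S x) = encv as G (h x)"
  proof
    fix x assume x: "x \<in> elems S"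
    have ex: "encv as S x \<in> elems (enc (length as) S)" using encv_elems x by blast
    have gid: "good as (encv as S x) id" using atoms_encv[OF x] by (auto simp: good_def)
    have "hsim as S G h (encv as S x) = Phi as S G h id (encv as S x)"
      unfolding hsim_def by (rule Phi_welldef[OF hG sup ex good_some gid])
    also have "\<dots> = encv as G (h x)" using decv_encv[OF x] by (simp add: Phi_def inv_id)
    finally show "hsim as S G h (encv as S x) = encv as G (h x)" .
  qed
qed



definition isL :: "val \<Rightarrow> bool" where "isL x \<longleftrightarrow> (\<exists>y. x = VL y)"

definition Ptarget :: "val list \<Rightarrow> val list" where
  "Ptarget w = map (\<lambda>i. if w ! i = down_l \<and> (\<exists>j. lne E w i = Some j \<and> isL (w ! j))
                         then w ! the (lne E w i) else bot_l) [0..<length w]"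

lemma Ptarget_nth: "i < length w \<Longrightarrow> Ptarget w ! i = (if w ! i = down_l \<and> (\<exists>j. lne E w i = Some j \<and> isL (w ! j))
                         then w ! the (lne E w i) else bot_l)"
  by (auto simp: Ptarget_def)

lemma length_Ptarget[simp]: "length (Ptarget w) = length w" by (simp add: Ptarget_def)

lemma PropIn_cases: "x \<in> elems PropIn \<Longrightarrow> (\<exists>a. x = VL (VA a)) \<or> x = eps_l \<or> x = down_l"
  by (auto simp: PropIn_def eps_l_def down_l_def)

lemma EIn_cases: "x \<in> elems (enc n PropIn) \<Longrightarrow>
   (\<exists>a. x = VL (VL (VA a))) \<or> (\<exists>k<n. x = VL (VR (ck k))) \<or> x = eps_l \<or> x = down_l"
  by (auto simp: PropIn_def eps_l_def down_l_def elems_cT)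

lemma Ptarget_encv:
  assumes w: "w \<in> lists (elems PropIn)"
  shows "Ptarget (map (encv as PropIn) w) = map (encv as PropOut) (atom_prop w)"
proof (rule nth_equalityI)
  fix i assume "i < length (Ptarget (map (encv as PropIn) w))"
  hence i: "i < length w" by simp
  have mem: "\<And>k. k < length w \<Longrightarrow> w ! k \<in> elems PropIn" using w by (meson in_listsD nth_mem)
  have e: "\<And>k. k < length w \<Longrightarrow> encv as PropIn (w ! k) = eps_l \<longleftrightarrow> w ! k = eps_l"
   and d: "\<And>k. k < length w \<Longrightarrow> encv as PropIn (w ! k) = down_l \<longleftrightarrow> w ! k = down_l"
   and l: "\<And>k. k < length w \<Longrightarrow> isL (encv as PropIn (w ! k)) \<longleftrightarrow> is_atom_l (w ! k)"
   and o: "\<And>k. k < length w \<Longrightarrow> is_atom_l (w ! k) \<Longrightarrow> encv as PropIn (w ! k) = encv as PropOut (w ! k)"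
    using mem PropIn_cases
    by (fastforce simp: PropIn_def PropOut_def eps_l_def down_l_def isL_def is_atom_l_def)+
  have ln: "lne E (map (encv as PropIn) w) i = lne E w i"
    using lne_map[of i w E "encv as PropIn"] i
    by (simp add: comp_def) (rule lne_cong, use e i in auto)
  show "Ptarget (map (encv as PropIn) w) ! i = map (encv as PropOut) (atom_prop w) ! i"
  proof (cases "lne E w i")
    case None
    thus ?thesis using i ln d by (auto simp: Ptarget_nth atom_prop_nth bot_l_def PropOut_def)
  next
    case (Some j)
    have j: "j < length w" using lne_Some[OF Some] i by simp
    show ?thesis using i ln d l[OF j] o[OF j] Some j by (auto simp: Ptarget_nth atom_prop_nth bot_l_def PropOut_def)
  qed
qed simp



fun t1 :: "val \<Rightarrow> val" where
  "t1 (VL (VL x)) = VL x"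
| "t1 (VL (VR c)) = down_l"
| "t1 x = x"

fun t2 :: "val \<Rightarrow> val" where
  "t2 (VL (VL x)) = VR (VR (VR VU))"
| "t2 (VL (VR c)) = VL c"
| "t2 (VR (VL VU)) = VR (VL VU)"
| "t2 x = VR (VR (VL VU))"

definition tsplit :: "val \<Rightarrow> val" where "tsplit x = VP (t1 x) (t2 x)"

definition T2 :: "nat \<Rightarrow> pof" where "T2 n = PSum (cT n) (PSum PUnit (PSum PUnit PUnit))"
definition O2 :: "nat \<Rightarrow> pof" where "O2 n = PSum (cT n) (PSum PUnit PUnit)"

definition nsf :: "nat \<Rightarrow> val \<Rightarrow> nat" where
  "nsf q x = (case x of VL c \<Rightarrow> Suc (cidx c) | _ \<Rightarrow> if x = VR (VL VU) then q else 0)"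
definition outf :: "nat \<Rightarrow> val \<Rightarrow> val" where
  "outf q x = (if x = VR (VR (VL VU)) then (if q > 0 then VL (ck (q - 1)) else VR (VL VU)) else VR (VR VU))"
definition dlt :: "nat \<Rightarrow> val \<Rightarrow> nat \<times> val" where "dlt q x = (nsf q x, outf q x)"

fun comb :: "val \<Rightarrow> val" where
  "comb (VP y1 y2) = (case y2 of VL c \<Rightarrow> VL (VR c)
      | _ \<Rightarrow> if y2 = VR (VL VU) then (case y1 of VL a \<Rightarrow> VL (VL a) | _ \<Rightarrow> VR VU) else VR VU)"
| "comb _ = VU"

lemma mealy_length[simp]: "length (mealy_run \<delta> q w) = length w"
  by (induction w arbitrary: q) auto

lemma tsplit_elems: "x \<in> elems (enc n PropIn) \<Longrightarrow> tsplit x \<in> elems (PProd PropIn (T2 n))"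
  by (drule EIn_cases) (auto simp: tsplit_def T2_def PropIn_def elems_cT eps_l_def down_l_def)

lemma tsplit_act: "x \<in> elems (enc n PropIn) \<Longrightarrow> tsplit (act \<pi> x) = act \<pi> (tsplit x)"
  by (drule EIn_cases) (auto simp: tsplit_def elems_cT eps_l_def down_l_def act_noatoms)

lemma comb_elems: "y \<in> elems (PProd PropOut (O2 n)) \<Longrightarrow> comb y \<in> elems (enc n PropOut)"
  by (auto simp: O2_def PropOut_def elems_cT)

lemma comb_act: "y \<in> elems (PProd PropOut (O2 n)) \<Longrightarrow> comb (act \<pi> y) = act \<pi> (comb y)"
  by (auto simp: O2_def PropOut_def elems_cT act_noatoms)

lemma finite_T2: "finite (elems (T2 n))" and finite_O2: "finite (elems (O2 n))"
  by (auto simp: T2_def O2_def finite_cT)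

lemma dlt_ok: "\<forall>q\<in>{0..n}. \<forall>x\<in>elems (T2 n). fst (dlt q x) \<in> {0..n} \<and> snd (dlt q x) \<in> elems (O2 n)"
  by (auto simp: T2_def O2_def elems_cT dlt_def nsf_def outf_def)

lemma cp_split: "comp_primes [] (enc n PropIn) (PProd PropIn (T2 n)) (map tsplit)"
  by (rule homomorphism[where h=tsplit]) (use tsplit_elems tsplit_act in \<open>auto simp: supported_on_def simp del: elems.simps\<close>)

lemma cp_comb: "comp_primes [] (PProd PropOut (O2 n)) (enc n PropOut) (map comb)"
  by (rule homomorphism[where h=comb]) (auto simp: supported_on_def comb_elems comb_act simp del: elems.simps)

lemma cp_mid: "comp_primes [] (PProd PropIn (T2 n)) (PProd PropOut (O2 n))
    (\<lambda>v. map2 VP (atom_prop (map pfst v)) (mealy_run dlt 0 (map psnd v)))"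
proof (rule parallel)
  show "comp_primes [] PropIn PropOut atom_prop" by (rule propagation) simp
  show "comp_primes [] (T2 n) (O2 n) (mealy_run dlt 0)"
    by (rule mealy_machine[of _ _ "{0..n}"]) (use finite_T2 finite_O2 dlt_ok in auto)
qed simp

definition stf :: "val list \<Rightarrow> nat \<Rightarrow> nat" where
  "stf w i = (case lne E w i of None \<Rightarrow> 0 | Some j \<Rightarrow> (case w ! j of VL (VR c) \<Rightarrow> Suc (cidx c) | _ \<Rightarrow> 0))"

lemma state_lemma:
  assumes w: "w \<in> lists (elems (enc n PropIn))"
  shows "i \<le> length w \<Longrightarrow> foldl (\<lambda>q x. fst (dlt q x)) 0 (take i (map t2 w)) = stf w i"
proof (induction i)
  case 0
  then show ?case by (simp add: stf_def)
next
  case (Suc i)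
  hence i: "i < length w" by simp
  have mem: "w ! i \<in> elems (enc n PropIn)" using w i by (meson in_listsD nth_mem)
  have "take (Suc i) (map t2 w) = take i (map t2 w) @ [t2 (w ! i)]"
    using i by (simp add: take_Suc_conv_app_nth)
  hence "foldl (\<lambda>q x. fst (dlt q x)) 0 (take (Suc i) (map t2 w)) = nsf (stf w i) (t2 (w ! i))"
    using Suc i by (simp add: dlt_def)
  also have "\<dots> = stf w (Suc i)"
    using EIn_cases[OF mem] by (auto simp: stf_def nsf_def eps_l_def down_l_def)
  finally show ?case .
qed

lemma Ptarget_eq: "w \<in> lists (elems (enc n PropIn)) \<Longrightarrow>
  Ptarget w = map comb (map2 VP (atom_prop (map pfst (map tsplit w))) (mealy_run dlt 0 (map psnd (map tsplit w))))"
proof -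
  assume w: "w \<in> lists (elems (enc n PropIn))"
  have mem: "\<And>k. k < length w \<Longrightarrow> w ! k \<in> elems (enc n PropIn)" using w by (meson in_listsD nth_mem)
  have p1: "map pfst (map tsplit w) = map t1 w" and p2: "map psnd (map tsplit w) = map t2 w"
    by (auto simp: tsplit_def)
  have t1e: "\<And>k. k < length w \<Longrightarrow> t1 (w ! k) = eps_l \<longleftrightarrow> w ! k = eps_l"
    using mem EIn_cases by (fastforce simp: eps_l_def down_l_def)
  show "Ptarget w = map comb (map2 VP (atom_prop (map pfst (map tsplit w))) (mealy_run dlt 0 (map psnd (map tsplit w))))"
    unfolding p1 p2
  proof (rule nth_equalityI)
    show "length (Ptarget w) = length (map comb (map2 VP (atom_prop (map t1 w)) (mealy_run dlt 0 (map t2 w))))"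
      by simp
  next
    fix i assume i0: "i < length (Ptarget w)"
    hence i: "i < length w" by simp
    have ln: "lne E (map t1 w) i = lne E w i"
      using lne_map[of i w E t1] i by (simp add: comp_def) (rule lne_cong, use t1e i in auto)
    have mr: "mealy_run dlt 0 (map t2 w) ! i = outf (stf w i) (t2 (w ! i))"
      using mealy_nth[of i "map t2 w" dlt 0] state_lemma[OF w, of i] i by (simp add: dlt_def)
    have lm: "length (mealy_run dlt 0 (map t2 w)) = length w"
      by simp
    have ap: "atom_prop (map t1 w) ! i = (if t1 (w ! i) = down_l \<and> (\<exists>j. lne E w i = Some j \<and> is_atom_l (map t1 w ! j))
                            then map t1 w ! the (lne E w i) else bot_l)"
      using atom_prop_nth[of i "map t1 w"] i ln by auto
    have lhs: "map comb (map2 VP (atom_prop (map t1 w)) (mealy_run dlt 0 (map t2 w))) ! i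
        = comb (VP (atom_prop (map t1 w) ! i) (outf (stf w i) (t2 (w ! i))))"
      using i lm mr by simp
    have main: "Ptarget w ! i = comb (VP (if t1 (w ! i) = down_l \<and> (\<exists>j. lne E w i = Some j \<and> is_atom_l (map t1 w ! j))
                            then map t1 w ! the (lne E w i) else bot_l) (outf (stf w i) (t2 (w ! i))))"
    proof (cases "lne E w i")
      case None
      thus ?thesis using i EIn_cases[OF mem[OF i]]
        by (auto simp: Ptarget_nth stf_def outf_def eps_l_def down_l_def bot_l_def)
    next
      case (Some j)
      have j: "j < length w" "w ! j \<noteq> eps_l" using lne_Some[OF Some] i by auto
      show ?thesis using i j Some EIn_cases[OF mem[OF i]] EIn_cases[OF mem[OF j(1)]]
        by (auto simp: Ptarget_nth stf_def outf_def eps_l_def down_l_def bot_l_def isL_def is_atom_l_def)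
    qed
    show "Ptarget w ! i = map comb (map2 VP (atom_prop (map t1 w)) (mealy_run dlt 0 (map t2 w))) ! i"
      by (subst lhs, subst ap, rule main)
  qed
qed

lemma cp_Ptarget: "comp_primes [] (enc n PropIn) (enc n PropOut) Ptarget"
proof -
  have c1: "comp_primes [] (enc n PropIn) (PProd PropOut (O2 n))
     (\<lambda>w. map2 VP (atom_prop (map pfst (map tsplit w))) (mealy_run dlt 0 (map psnd (map tsplit w))))"
    by (rule sequential[OF cp_split cp_mid]) simp
  show ?thesis by (rule sequential[OF c1 cp_comb]) (use Ptarget_eq in blast)
qed



lemma sim: "comp_primes as S G f \<Longrightarrow> \<exists>F. comp_primes [] (enc (length as) S) (enc (length as) G) F \<and>
   (\<forall>w\<in>lists (elems S). F (map (encv as S) w) = map (encv as G) (f w))"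
proof (induction rule: comp_primes.induct)
  case (homomorphism S h G f)
  note hp = hsim_props[OF homomorphism.hyps(1,2)]
  have "comp_primes [] (enc (length as) S) (enc (length as) G) (map (hsim as S G h))"
    by (rule comp_primes.homomorphism[where h="hsim as S G h"]) (use hp in auto)
  moreover have "\<forall>w\<in>lists (elems S). map (hsim as S G h) (map (encv as S) w) = map (encv as G) (f w)"
    using hp(3) homomorphism.hyps(3) by auto
  ultimately show ?case by blast
next
  case (mealy_machine S G Q q0 \<delta> f)
  have eS: "elems (enc (length as) S) = elems S" and eG: "elems (enc (length as) G) = elems G"
    using elems_enc_finite mealy_machine.hyps(1,2) by blast+
  have "comp_primes [] (enc (length as) S) (enc (length as) G) f"
    by (rule comp_primes.mealy_machine[of _ _ Q q0 \<delta>]) (use mealy_machine.hyps eS eG in auto)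
  moreover have "\<forall>w\<in>lists (elems S). f (map (encv as S) w) = map (encv as G) (f w)"
  proof
    fix w assume w: "w \<in> lists (elems S)"
    have "map (encv as S) w = w" using w finite_noatoms[OF mealy_machine.hyps(1)]
      by (auto intro!: map_idI encv_noatoms)
    moreover have "f w \<in> lists (elems G)"
      using mealy_out[of Q "elems S" \<delta> "elems G" q0 w] mealy_machine.hyps w by auto
    hence "map (encv as G) (f w) = f w" using finite_noatoms[OF mealy_machine.hyps(2)]
      by (auto intro!: map_idI encv_noatoms)
    ultimately show "f (map (encv as S) w) = map (encv as G) (f w)" by simp
  qed
  ultimately show ?case by blast
next
  case (propagation f)
  have "\<forall>w\<in>lists (elems PropIn). Ptarget (map (encv as PropIn) w) = map (encv as PropOut) (f w)"
    using propagation Ptarget_encv by auto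
  then show ?case using cp_Ptarget by blast
next
  case (sequential S G f D g h)
  from sequential.IH obtain F1 F2 where
    F1: "comp_primes [] (enc (length as) S) (enc (length as) G) F1"
        "\<forall>w\<in>lists (elems S). F1 (map (encv as S) w) = map (encv as G) (f w)" and
    F2: "comp_primes [] (enc (length as) G) (enc (length as) D) F2"
        "\<forall>w\<in>lists (elems G). F2 (map (encv as G) w) = map (encv as D) (g w)" by blast
  have "comp_primes [] (enc (length as) S) (enc (length as) D) (\<lambda>w. F2 (F1 w))"
    by (rule comp_primes.sequential[OF F1(1) F2(1)]) simp
  moreover have "\<forall>w\<in>lists (elems S). F2 (F1 (map (encv as S) w)) = map (encv as D) (h w)"
  proof
    fix w assume w: "w \<in> lists (elems S)"
    have "f w \<in> lists (elems G)" using cp_out[OF sequential.hyps(1) w] by blast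
    thus "F2 (F1 (map (encv as S) w)) = map (encv as D) (h w)" using F1(2) F2(2) w sequential.hyps(3) by simp
  qed
  ultimately show ?case by blast
next
  case (parallel S1 G1 f1 S2 G2 f2 h)
  from parallel.IH obtain F1 F2 where
    F1: "comp_primes [] (enc (length as) S1) (enc (length as) G1) F1"
        "\<forall>w\<in>lists (elems S1). F1 (map (encv as S1) w) = map (encv as G1) (f1 w)" and
    F2: "comp_primes [] (enc (length as) S2) (enc (length as) G2) F2"
        "\<forall>w\<in>lists (elems S2). F2 (map (encv as S2) w) = map (encv as G2) (f2 w)" by blast
  have "comp_primes [] (PProd (enc (length as) S1) (enc (length as) S2)) (PProd (enc (length as) G1) (enc (length as) G2))
     (\<lambda>w. map2 VP (F1 (map pfst w)) (F2 (map psnd w)))"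
    by (rule comp_primes.parallel[OF F1(1) F2(1)]) simp
  hence "comp_primes [] (enc (length as) (PProd S1 S2)) (enc (length as) (PProd G1 G2))
     (\<lambda>w. map2 VP (F1 (map pfst w)) (F2 (map psnd w)))" by simp
  moreover have "\<forall>w\<in>lists (elems (PProd S1 S2)).
     map2 VP (F1 (map pfst (map (encv as (PProd S1 S2)) w))) (F2 (map psnd (map (encv as (PProd S1 S2)) w)))
       = map (encv as (PProd G1 G2)) (h w)"
  proof
    fix w assume w: "w \<in> lists (elems (PProd S1 S2))"
    have w1: "map pfst w \<in> lists (elems S1)" "map psnd w \<in> lists (elems S2)" using w by force+
    have m1: "map pfst (map (encv as (PProd S1 S2)) w) = map (encv as S1) (map pfst w)"
     and m2: "map psnd (map (encv as (PProd S1 S2)) w) = map (encv as S2) (map psnd w)" using w by force+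
    have "map2 VP (F1 (map pfst (map (encv as (PProd S1 S2)) w))) (F2 (map psnd (map (encv as (PProd S1 S2)) w)))
        = map2 VP (map (encv as G1) (f1 (map pfst w))) (map (encv as G2) (f2 (map psnd w)))"
      by (simp only: m1 m2 F1(2)[rule_format, OF w1(1)] F2(2)[rule_format, OF w1(2)])
    also have "\<dots> = map (encv as (PProd G1 G2)) (map2 VP (f1 (map pfst w)) (f2 (map psnd w)))"
      by (simp add: zip_map1 zip_map2 split_def)
    also have "\<dots> = map (encv as (PProd G1 G2)) (h w)" using parallel.hyps(3) w by simp
    finally show "map2 VP (F1 (map pfst (map (encv as (PProd S1 S2)) w))) (F2 (map psnd (map (encv as (PProd S1 S2)) w)))
       = map (encv as (PProd G1 G2)) (h w)" .
  qed
  ultimately show ?case by blast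
qed



definition dupv :: "val \<Rightarrow> val" where "dupv x = VP x x"

lemma embv_image_act:
  assumes "bij \<pi>" "y \<in> elems (enc n G)"
  shows "act \<pi> y \<in> embv G ` elems G \<longleftrightarrow> y \<in> embv G ` elems G"
proof
  assume "act \<pi> y \<in> embv G ` elems G"
  then obtain z where z: "z \<in> elems G" "act \<pi> y = embv G z" by auto
  have "y = act (inv \<pi>) (embv G z)" using z act_inv[OF assms(1)] by metis
  also have "\<dots> = embv G (act (inv \<pi>) z)" using embv_act z by metis
  finally show "y \<in> embv G ` elems G" using act_elems z by blast
next
  assume "y \<in> embv G ` elems G"
  then obtain z where z: "z \<in> elems G" "y = embv G z" by auto
  thus "act \<pi> y \<in> embv G ` elems G" using embv_act act_elems by (metis imageI)
qed

theorem mainTheorem10: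
  fixes abar :: "nat list" and S G :: pof and f :: "val list \<Rightarrow> val list"
  assumes "\<forall>w\<in>lists (elems S). f w \<in> lists (elems G)"
    and "equivariant_str (elems S) f"
    and "comp_primes abar S G f"
  shows "comp_primes [] S G f"
proof -
  note fG = assms(1) and feq = assms(2) and cpf = assms(3)
  define n where "n = length abar"
  obtain F where F: "comp_primes [] (enc n S) (enc n G) F"
    "\<forall>w\<in>lists (elems S). F (map (encv abar S) w) = map (encv abar G) (f w)"
    using sim[OF cpf] unfolding n_def by blast
  have flen: "length (f w) = length w" if "w \<in> lists (elems S)" for w
    using cp_out[OF cpf that] by blast
  have key: "F (map (embv S) w) = map (embv G) (f w)" if w: "w \<in> lists (elems S)" for w
  proof -
    obtain \<pi> where \<pi>: "bij \<pi>" "\<pi> ` latoms w \<inter> set abar = {}"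
      using exists_moving[of "latoms w" "set abar"] by auto
    define w' where "w' = map (act \<pi>) w"
    have w': "w' \<in> lists (elems S)" using w lists_act w'_def by blast
    have e1: "map (encv abar S) w' = map (act \<pi>) (map (embv S) w)"
    proof -
      have "map (encv abar S) w' = map (embv S) w'"
      proof (rule map_cong[OF refl])
        fix x assume x: "x \<in> set w'"
        have "atoms x \<subseteq> latoms w'" using x by (auto simp: latoms_def)
        hence "atoms x \<inter> set abar = {}" using \<pi>(2) by (auto simp: w'_def)
        thus "encv abar S x = embv S x" using encv_emb w' x by blast
      qed
      also have "\<dots> = map (act \<pi>) (map (embv S) w)" using w embv_act by (auto simp: w'_def)
      finally show ?thesis .
    qed
    have fw: "f w \<in> lists (elems G)" using fG w by blast
    have fw': "f w' = map (act \<pi>) (f w)"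
      using feq w \<pi>(1) unfolding equivariant_str_def supported_str_def w'_def by simp
    have e2: "map (encv abar G) (f w') = map (act \<pi>) (map (embv G) (f w))"
    proof -
      have "map (encv abar G) (map (act \<pi>) (f w)) = map (embv G) (map (act \<pi>) (f w))"
      proof (rule map_cong[OF refl])
        fix x assume x: "x \<in> set (map (act \<pi>) (f w))"
        have "atoms x \<subseteq> latoms (map (act \<pi>) (f w))" using x by (auto simp: latoms_def)
        also have "\<dots> \<subseteq> \<pi> ` latoms w" using equiv_latoms[OF feq w] by auto
        finally have "atoms x \<inter> set abar = {}" using \<pi>(2) by auto
        moreover have "x \<in> elems G" using x fw act_elems by auto
        ultimately show "encv abar G x = embv G x" using encv_emb by blast
      qed
      also have "\<dots> = map (act \<pi>) (map (embv G) (f w))" using fw embv_act by auto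
      finally show ?thesis using fw' by simp
    qed
    have we: "map (embv S) w \<in> lists (elems (enc n S))" using w embv_elems by auto
    have "map (act \<pi>) (F (map (embv S) w)) = F (map (act \<pi>) (map (embv S) w))"
      using cp_equiv[OF F(1) refl \<pi>(1) we] by simp
    also have "\<dots> = F (map (encv abar S) w')" using e1 by simp
    also have "\<dots> = map (encv abar G) (f w')" using F(2) w' by blast
    also have "\<dots> = map (act \<pi>) (map (embv G) (f w))" using e2 .
    finally show ?thesis using map_act_inj[OF \<pi>(1)] by blast
  qed
  define dec where "dec = (\<lambda>v. if pfst v \<in> embv G ` elems G then unemb G (pfst v) else hd (f [psnd v]))"
  have hdf: "hd (f [z]) \<in> elems G" if "z \<in> elems S" for z
  proof -
    have "[z] \<in> lists (elems S)" using that by simp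
    hence "f [z] \<in> lists (elems G)" "length (f [z]) = 1" using fG flen by auto
    thus ?thesis by (cases "f [z]") auto
  qed
  have cp_dup: "comp_primes [] S (PProd S S) (map dupv)"
    by (rule homomorphism[where h=dupv]) (auto simp: supported_on_def dupv_def)
  have cp_emb: "comp_primes [] S (enc n S) (map (embv S))"
    by (rule homomorphism[where h="embv S"]) (auto simp: supported_on_def embv_elems embv_act)
  have cp_FE: "comp_primes [] S (enc n G) (\<lambda>w. F (map (embv S) w))"
    by (rule sequential[OF cp_emb F(1)]) simp
  have cp_id: "comp_primes [] S S (\<lambda>w. w)"
    by (rule homomorphism[where h="\<lambda>x. x"]) (auto simp: supported_on_def)
  have cp_par: "comp_primes [] (PProd S S) (PProd (enc n G) S)
      (\<lambda>v. map2 VP (F (map (embv S) (map pfst v))) (map psnd v))"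
    by (rule parallel[OF cp_FE cp_id]) simp
  have dec_in: "\<forall>x\<in>elems (PProd (enc n G) S). dec x \<in> elems G"
  proof
    fix x assume "x \<in> elems (PProd (enc n G) S)"
    then obtain y z where x: "x = VP y z" "y \<in> elems (enc n G)" "z \<in> elems S" by auto
    show "dec x \<in> elems G"
    proof (cases "y \<in> embv G ` elems G")
      case True
      then obtain u where "u \<in> elems G" "y = embv G u" by auto
      thus ?thesis using x unemb_embv by (auto simp: dec_def)
    next
      case False
      thus ?thesis using x hdf by (auto simp: dec_def)
    qed
  qed
  have dec_sup: "supported_on [] (elems (PProd (enc n G) S)) dec"
    unfolding supported_on_def
  proof (intro allI impI ballI)
    fix \<pi> :: "nat \<Rightarrow> nat" and x assume "bij \<pi> \<and> (\<forall>a\<in>set []. \<pi> a = a)" and xm: "x \<in> elems (PProd (enc n G) S)"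
    hence b: "bij \<pi>" by simp
    obtain y z where x: "x = VP y z" "y \<in> elems (enc n G)" "z \<in> elems S" using xm by auto
    show "dec (act \<pi> x) = act \<pi> (dec x)"
    proof (cases "y \<in> embv G ` elems G")
      case True
      then obtain u where u: "u \<in> elems G" "y = embv G u" by auto
      have "act \<pi> y \<in> embv G ` elems G" using embv_image_act[OF b x(2)] True by simp
      moreover have "unemb G (act \<pi> y) = act \<pi> (unemb G y)"
        using u embv_act unemb_embv act_elems by metis
      ultimately show ?thesis using True x by (simp add: dec_def)
    next
      case False
      have "act \<pi> y \<notin> embv G ` elems G" using embv_image_act[OF b x(2)] False by simp
      moreover have "f [act \<pi> z] = map (act \<pi>) (f [z])"
      proof -
        have "[z] \<in> lists (elems S)" using x(3) by simp
        moreover have all: "\<forall>w\<in>lists (elems S). f (map (act \<pi>) w) = map (act \<pi>) (f w)"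
          using feq b unfolding equivariant_str_def supported_str_def by simp
        ultimately have "f (map (act \<pi>) [z]) = map (act \<pi>) (f [z])" by blast
        thus ?thesis by simp
      qed
      moreover have "f [z] \<noteq> []" using flen[of "[z]"] x(3) by auto
      ultimately show ?thesis using False x by (simp add: dec_def hd_map)
    qed
  qed
  have cp_dec: "comp_primes [] (PProd (enc n G) S) G (map dec)"
    by (rule homomorphism[where h=dec]) (use dec_in dec_sup in auto)
  have c1: "comp_primes [] S (PProd (enc n G) S)
      (\<lambda>w. map2 VP (F (map (embv S) (map pfst (map dupv w)))) (map psnd (map dupv w)))"
    by (rule sequential[OF cp_dup cp_par]) simp
  show ?thesis
  proof (rule sequential[OF c1 cp_dec], intro ballI)
    fix w assume w: "w \<in> lists (elems S)"
    have p: "map pfst (map dupv w) = w" "map psnd (map dupv w) = w" by (induction w) (auto simp: dupv_def)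
    have fw: "f w \<in> lists (elems G)" using fG w by blast
    show "f w = map dec (map2 VP (F (map (embv S) (map pfst (map dupv w)))) (map psnd (map dupv w)))"
      unfolding p key[OF w]
    proof (rule nth_equalityI)
      show "length (f w) = length (map dec (map2 VP (map (embv G) (f w)) w))" using flen[OF w] by simp
    next
      fix i assume i: "i < length (f w)"
      have m: "f w ! i \<in> elems G" using fw i by (meson in_listsD nth_mem)
      have "map dec (map2 VP (map (embv G) (f w)) w) ! i = dec (VP (embv G (f w ! i)) (w ! i))"
        using i flen[OF w] by simp
      also have "\<dots> = f w ! i" using m unemb_embv by (auto simp: dec_def)
      finally show "f w ! i = map dec (map2 VP (map (embv G) (f w)) w) ! i" by simp
    qed
  qed
qed


end
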